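(* Let $\mathbf x_\alpha$ and $\mathbf y_\beta$ be distinct variables, $\mathbf A_\alpha$ and $\mathbf B_\gamma$ expressions, and suppose that either (1) $\mathbf A_\alpha$ is eval-free and $\mathbf y_\beta$ is not free in $\mathbf A_\alpha$, or (2) $\mathbf B_\gamma$ is eval-free and $\mathbf x_\alpha$ is not free in $\mathbf B_\gamma$. Then $(\lambda\mathbf x_\alpha.\lambda\mathbf y_\beta.\mathbf B_\gamma)\,\mathbf A_\alpha=\lambda\mathbf y_\beta.((\lambda\mathbf x_\alpha.\mathbf B_\gamma)\,\mathbf A_\alpha)$ is valid in CTT$_{\rm qe}$.
   Context: The logic CTT$_{\rm qe}$. Types: $\iota$ (individuals), $o$ (truth values), $\epsilon$ (constructions), and $(\alpha\to\beta)$ for types $\alpha,\beta$. Let $\mathcal V$ be a set of typed symbols (variables) containing denumerably many symbols $\mathbf{x}_\alpha$ of each type $\alpha$, and $\mathcal C$ a disjoint set of typed symbols (constants) containing the logical constants $=_{\alpha\to\alpha\to o}$ (each $\alpha$), $\mathsf{is\text{-}var}_{\epsilon\to o}$, $\mathsf{is\text{-}var}^\alpha_{\epsilon\to o}$, $\mathsf{is\text{-}con}_{\epsilon\to o}$, $\mathsf{is\text{-}con}^\alpha_{\epsilon\to o}$, $\mathsf{app}_{\epsilon\to\epsilon\to\epsilon}$, $\mathsf{abs}_{\epsilon\to\epsilon\to\epsilon}$, $\mathsf{quo}_{\epsilon\to\epsilon}$, $\mathsf{is\text{-}expr}_{\epsilon\to o}$, $\mathsf{is\text{-}expr}^\alpha_{\epsilon\to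 o}$ (each $\alpha$), $\sqsubset_{\epsilon\to\epsilon\to o}$, $\mathsf{is\text{-}free\text{-}in}_{\epsilon\to\epsilon\to o}$. Expressions $\mathbf{A}_\alpha$ (subscript = type) are defined inductively: (1) a variable $\mathbf{x}_\alpha$; (2) a constant $\mathbf{c}_\alpha$; (3) application $(\mathbf{F}_{\alpha\to\beta}\,\mathbf{A}_\alpha)$ of type $\beta$; (4) abstraction $(\lambda\mathbf{x}_\alpha.\mathbf{B}_\beta)$ of type $\alpha\to\beta$; (5) quotation $\ulcorner\mathbf{A}_\alpha\urcorner$ of type $\epsilon$, formed only if $\mathbf{A}_\alpha$ is eval-free; (6) evaluation $[\![\mathbf{A}_\epsilon]\!]_{\mathbf{B}_\beta}$ of type $\beta$, written $[\![\mathbf{A}_\epsilon]\!]_\beta$ (the second component only fixes the type). An expression is eval-free if built using rules (1)–(5) only. A formula is an expression of type $o$. In an eval-free expression, an occurrence of a variable $\mathbf{x}_\alpha$ is free if it is not inside a quotation and not inside a subexpression of the form $\lambda\mathbf{x}_\alpha.\mathbf{C}$; $\mathbf{x}_\alpha$ is free in $\mathbf{B}$ if it has a free occurrence there. Constructions: the smallest set of expressions of type $\epsilon$ containing all $\ulcorner\mathbf{x}_\alpha\urcorner$ and $\ulcorner\mathbf{c}_\alpha\urcorner$ and closed under forming $\mathsf{app}\,\mathbf{A}_\epsilon\,\mathbf{B}_\epsilon$, $\mathsf{abs}\,\mathbf{A}_\epsilon\,\mathbf{B}_\epsilon$, $\mathsf{quo}\,\mathbf{A}_\epsilon$. The injective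 map $\mathcal E$ from eval-free expressions to constructions: $\mathcal E(\mathbf{x}_\alpha)=\ulcorner\mathbf{x}_\alpha\urcorner$, $\mathcal E(\mathbf{c}_\alpha)=\ulcorner\mathbf{c}_\alpha\urcorner$, $\mathcal E(\mathbf{F}\,\mathbf{A})=\mathsf{app}\,\mathcal E(\mathbf F)\,\mathcal E(\mathbf A)$, $\mathcal E(\lambda\mathbf{x}_\alpha.\mathbf B)=\mathsf{abs}\,\mathcal E(\mathbf x_\alpha)\,\mathcal E(\mathbf B)$, $\mathcal E(\ulcorner\mathbf A\urcorner)=\mathsf{quo}\,\mathcal E(\mathbf A)$. Abbreviations: $\mathbf A_\alpha=\mathbf B_\alpha$ is $=_{\alpha\to\alpha\to o}\mathbf A_\alpha\mathbf B_\alpha$; $T_o$ is $(=_{o\to o\to o}\,=\,=_{o\to o\to o})$; $F_o$ is $(\lambda x_o.T_o)=(\lambda x_o.x_o)$; $\forall\mathbf x_\alpha.\mathbf A_o$ is $(\lambda\mathbf x_\alpha.T_o)=(\lambda\mathbf x_\alpha.\mathbf A_o)$; $\neg\mathbf A_o$ is $=_{o\to o\to o}F_o\,\mathbf A_o$; $\exists\mathbf x_\alpha.\mathbf A_o$ is $\neg\forall\mathbf x_\alpha.\neg\mathbf A_o$; $\mathbf A\neq\mathbf B$ is $\neg(\mathbf A=\mathbf B)$; $\mathsf{IS\text{-}EFFECTIVE\text{-}IN}(\mathbf x_\alpha,\mathbf B_\beta)$ is $\exists\mathbf y_\alpha.((\lambda\mathbf x_\alpha.\mathbf B_\beta)\,\mathbf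 y_\alpha\neq\mathbf B_\beta)$ for a variable $\mathbf y_\alpha$ distinct from $\mathbf x_\alpha$. Semantics. A frame is $\{D_\alpha\}$ with $D_\iota$ nonempty, $D_o=\{\mathrm T,\mathrm F\}$, $D_\epsilon$ the set of all constructions, and $D_{\alpha\to\beta}$ some set of total functions $D_\alpha\to D_\beta$. An interpretation $(\{D_\alpha\},I)$ has $I(\mathbf c_\alpha)\in D_\alpha$ for each constant, with: $I(=_{\alpha\to\alpha\to o})$ the (curried) identity relation on $D_\alpha$; $I(\mathsf{is\text{-}var})(A)=\mathrm T$ iff $A=\ulcorner\mathbf x_\beta\urcorner$ for some variable of some type; $I(\mathsf{is\text{-}var}^\alpha)(A)=\mathrm T$ iff $A=\ulcorner\mathbf x_\alpha\urcorner$ for some variable of type $\alpha$; likewise $\mathsf{is\text{-}con}$, $\mathsf{is\text{-}con}^\alpha$ with constants; $I(\mathsf{app})(A)(B)$, $I(\mathsf{abs})(A)(B)$, $I(\mathsf{quo})(A)$ are the constructions $\mathsf{app}\,A\,B$, $\mathsf{abs}\,A\,B$, $\mathsf{quo}\,A$; $I(\mathsf{is\text{-}expr})(A)=\mathrm T$ iff $A=\mathcal E(\mathbf B_\beta)$ for some eval-free $\mathbf B_\beta$ of some type; $I(\mathsf{is\text{-}expr}^\alpha)(A)=\mathrm T$ iff $A=\mathcal E(\mathbf B_\alpha)$ for some eval-free $\mathbf B_\alpha$; $I(\sqsubset)(A)(B)=\mathrm T$ iff $A$ is a proper subexpression of $B$; $I(\mathsf{is\text{-}free\text{-}in})(A)(B)=\mathrm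 T$ iff $A=\ulcorner\mathbf x_\alpha\urcorner$, $B=\mathcal E(\mathbf C_\beta)$ for some eval-free $\mathbf C_\beta$, and $\mathbf x_\alpha$ is free in $\mathbf C_\beta$. An assignment $\phi$ maps each $\mathbf x_\alpha\in\mathcal V$ into $D_\alpha$; $\phi[\mathbf x_\alpha\mapsto d]$ is the usual modification. A general model is an interpretation $\mathcal M$ for which there is a valuation $V^{\mathcal M}_\phi(\mathbf C_\gamma)\in D_\gamma$ (for all $\phi$ and all expressions) with: (V1) $V_\phi(\mathbf x_\alpha)=\phi(\mathbf x_\alpha)$; (V2) $V_\phi(\mathbf c_\alpha)=I(\mathbf c_\alpha)$; (V3) $V_\phi(\mathbf F\,\mathbf A)=V_\phi(\mathbf F)(V_\phi(\mathbf A))$; (V4) $V_\phi(\lambda\mathbf x_\alpha.\mathbf B_\beta)$ is the $f\in D_{\alpha\to\beta}$ with $f(d)=V_{\phi[\mathbf x_\alpha\mapsto d]}(\mathbf B_\beta)$; (V5) $V_\phi(\ulcorner\mathbf A_\alpha\urcorner)=\mathcal E(\mathbf A_\alpha)$; (V6) if $V_\phi(\mathsf{is\text{-}expr}^\beta\,\mathbf A_\epsilon)=\mathrm T$ then $V_\phi([\![\mathbf A_\epsilon]\!]_\beta)=V_\phi(\mathcal E^{-1}(V_\phi(\mathbf A_\epsilon)))$; (V7) for each $\beta$ there is a fixed $d_\beta\in D_\beta$ such that $V_\phi([\![\mathbf A_\epsilon]\!]_\beta)=d_\beta$ whenever $V_\phi(\mathsf{is\text{-}expr}^\beta\,\mathbf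 A_\epsilon)=\mathrm F$. $\mathcal M\models\mathbf A_o$ ($\mathbf A_o$ valid in $\mathcal M$) iff $V_\phi(\mathbf A_o)=\mathrm T$ for all $\phi$; $\models\mathbf A_o$ (valid in CTT$_{\rm qe}$) iff valid in every general model. A standard model is an interpretation in which every $D_{\alpha\to\beta}$ is the set of all total functions $D_\alpha\to D_\beta$. *)

theory Defs
  imports Main
begin

datatype ty = Iota | Omicron | Epsilon | Fun ty ty

datatype 'c con =
    CEq ty | CIsVar | CIsVarT ty | CIsCon | CIsConT ty
  | CApp | CAbs | CQuo | CIsExpr | CIsExprT ty | CSub | CIsFreeIn
  | CUser 'c ty

fun ctype :: "'c con \<Rightarrow> ty" where
  "ctype (CEq a) = Fun a (Fun a Omicron)"
| "ctype CIsVar = Fun Epsilon Omicron"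
| "ctype (CIsVarT a) = Fun Epsilon Omicron"
| "ctype CIsCon = Fun Epsilon Omicron"
| "ctype (CIsConT a) = Fun Epsilon Omicron"
| "ctype CApp = Fun Epsilon (Fun Epsilon Epsilon)"
| "ctype CAbs = Fun Epsilon (Fun Epsilon Epsilon)"
| "ctype CQuo = Fun Epsilon Epsilon"
| "ctype CIsExpr = Fun Epsilon Omicron"
| "ctype (CIsExprT a) = Fun Epsilon Omicron"
| "ctype CSub = Fun Epsilon (Fun Epsilon Omicron)"
| "ctype CIsFreeIn = Fun Epsilon (Fun Epsilon Omicron)"
| "ctype (CUser c a) = a"

text \<open>Raw expressions. A variable is a name (nat) together with its type.
  Evaluation [[A]]_B is represented by Eval A \<beta>, since B only fixes the type \<beta>.\<close>
datatype 'c expr =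
    Var nat ty
  | Con "'c con"
  | Ap "'c expr" "'c expr"
  | Lam nat ty "'c expr"
  | Quote "'c expr"
  | Eval "'c expr" ty

fun evalfree :: "'c expr \<Rightarrow> bool" where
  "evalfree (Var x a) = True"
| "evalfree (Con c) = True"
| "evalfree (Ap f a) = (evalfree f \<and> evalfree a)"
| "evalfree (Lam x a b) = evalfree b"
| "evalfree (Quote a) = evalfree a"
| "evalfree (Eval a b) = False"

inductive wt :: "'c expr \<Rightarrow> ty \<Rightarrow> bool" where
  wt_var: "wt (Var x a) a"
| wt_con: "wt (Con c) (ctype c)"
| wt_ap: "wt F (Fun a b) \<Longrightarrow> wt A a \<Longrightarrow> wt (Ap F A) b"
| wt_lam: "wt B b \<Longrightarrow> wt (Lam x a B) (Fun a b)"
| wt_quote: "wt A a \<Longrightarrow> evalfree A \<Longrightarrow> wt (Quote A) Epsilon"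
| wt_eval: "wt A Epsilon \<Longrightarrow> wt (Eval A b) b"

text \<open>Free occurrence of x_\<alpha> (meaningful for eval-free expressions).\<close>
fun free :: "nat \<Rightarrow> ty \<Rightarrow> 'c expr \<Rightarrow> bool" where
  "free x a (Var y b) = (x = y \<and> a = b)"
| "free x a (Con c) = False"
| "free x a (Ap F A) = (free x a F \<or> free x a A)"
| "free x a (Lam y b B) = (\<not> (x = y \<and> a = b) \<and> free x a B)"
| "free x a (Quote A) = False"
| "free x a (Eval A b) = False"

fun subexprs :: "'c expr \<Rightarrow> 'c expr set" where
  "subexprs (Var x a) = {Var x a}"
| "subexprs (Con c) = {Con c}"
| "subexprs (Ap F A) = insert (Ap F A) (subexprs F \<union> subexprs A)"
| "subexprs (Lam x a B) = insert (Lam x a B) (insert (Var x a) (subexprs B))"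
| "subexprs (Quote A) = insert (Quote A) (subexprs A)"
| "subexprs (Eval A b) = insert (Eval A b) (subexprs A)"

definition proper_subexpr :: "'c expr \<Rightarrow> 'c expr \<Rightarrow> bool" where
  "proper_subexpr A B \<longleftrightarrow> A \<in> subexprs B \<and> A \<noteq> B"

inductive_set constructions :: "'c expr set" where
  "Quote (Var x a) \<in> constructions"
| "Quote (Con c) \<in> constructions"
| "A \<in> constructions \<Longrightarrow> B \<in> constructions \<Longrightarrow> Ap (Ap (Con CApp) A) B \<in> constructions"
| "A \<in> constructions \<Longrightarrow> B \<in> constructions \<Longrightarrow> Ap (Ap (Con CAbs) A) B \<in> constructions"
| "A \<in> constructions \<Longrightarrow> Ap (Con CQuo) A \<in> constructions"

fun E :: "'c expr \<Rightarrow> 'c expr" where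
  "E (Var x a) = Quote (Var x a)"
| "E (Con c) = Quote (Con c)"
| "E (Ap F A) = Ap (Ap (Con CApp) (E F)) (E A)"
| "E (Lam x a B) = Ap (Ap (Con CAbs) (Quote (Var x a))) (E B)"
| "E (Quote A) = Ap (Con CQuo) (E A)"
| "E (Eval A b) = undefined"

text \<open>Function domains D (Fun a b) are represented
  extensionally: an element f acts as the function (mAp f) on D a (Henkin applicative
  structure with extensionality).\<close>
record ('c, 'u) model =
  mD :: "ty \<Rightarrow> 'u set"
  mAp :: "'u \<Rightarrow> 'u \<Rightarrow> 'u"
  mBool :: "bool \<Rightarrow> 'u"
  mCons :: "'c expr \<Rightarrow> 'u"
  mI :: "'c con \<Rightarrow> 'u"

definition frame :: "('c, 'u) model \<Rightarrow> bool" where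
  "frame M \<longleftrightarrow>
     mD M Iota \<noteq> {} \<and>
     inj (mBool M) \<and> mD M Omicron = range (mBool M) \<and>
     inj_on (mCons M) constructions \<and> mD M Epsilon = mCons M ` constructions \<and>
     (\<forall>a b f x. f \<in> mD M (Fun a b) \<longrightarrow> x \<in> mD M a \<longrightarrow> mAp M f x \<in> mD M b) \<and>
     (\<forall>a b f g. f \<in> mD M (Fun a b) \<longrightarrow> g \<in> mD M (Fun a b) \<longrightarrow>
        (\<forall>x \<in> mD M a. mAp M f x = mAp M g x) \<longrightarrow> f = g)"

definition is_interpretation :: "('c, 'u) model \<Rightarrow> bool" where
  "is_interpretation M \<longleftrightarrow> frame M \<and>
     (\<forall>c. mI M c \<in> mD M (ctype c)) \<and>
     (\<forall>a. \<forall>x \<in> mD M a. \<forall>y \<in> mD M a.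
        mAp M (mAp M (mI M (CEq a)) x) y = mBool M (x = y)) \<and>
     (\<forall>A \<in> constructions.
        mAp M (mI M CIsVar) (mCons M A) = mBool M (\<exists>x b. A = Quote (Var x b)) \<and>
        (\<forall>a. mAp M (mI M (CIsVarT a)) (mCons M A) = mBool M (\<exists>x. A = Quote (Var x a))) \<and>
        mAp M (mI M CIsCon) (mCons M A) = mBool M (\<exists>c. A = Quote (Con c)) \<and>
        (\<forall>a. mAp M (mI M (CIsConT a)) (mCons M A) =
               mBool M (\<exists>c. ctype c = a \<and> A = Quote (Con c))) \<and>
        mAp M (mI M CQuo) (mCons M A) = mCons M (Ap (Con CQuo) A) \<and>
        mAp M (mI M CIsExpr) (mCons M A) =
          mBool M (\<exists>B b. evalfree B \<and> wt B b \<and> A = E B) \<and>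
        (\<forall>a. mAp M (mI M (CIsExprT a)) (mCons M A) =
               mBool M (\<exists>B. evalfree B \<and> wt B a \<and> A = E B)) \<and>
        (\<forall>B \<in> constructions.
           mAp M (mAp M (mI M CApp) (mCons M A)) (mCons M B) =
             mCons M (Ap (Ap (Con CApp) A) B) \<and>
           mAp M (mAp M (mI M CAbs) (mCons M A)) (mCons M B) =
             mCons M (Ap (Ap (Con CAbs) A) B) \<and>
           mAp M (mAp M (mI M CSub) (mCons M A)) (mCons M B) =
             mBool M (proper_subexpr A B) \<and>
           mAp M (mAp M (mI M CIsFreeIn) (mCons M A)) (mCons M B) =
             mBool M (\<exists>x a C c. A = Quote (Var x a) \<and> evalfree C \<and> wt C c \<and>
                                B = E C \<and> free x a C)))"

definition assignment :: "('c, 'u) model \<Rightarrow> (nat \<times> ty \<Rightarrow> 'u) \<Rightarrow> bool" where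
  "assignment M \<phi> \<longleftrightarrow> (\<forall>x a. \<phi> (x, a) \<in> mD M a)"

text \<open>V is a valuation for M (conditions V1--V7), with d the fixed default values of V7.\<close>
definition valuation ::
  "('c, 'u) model \<Rightarrow> ((nat \<times> ty \<Rightarrow> 'u) \<Rightarrow> 'c expr \<Rightarrow> 'u) \<Rightarrow> (ty \<Rightarrow> 'u) \<Rightarrow> bool" where
  "valuation M V d \<longleftrightarrow>
     (\<forall>b. d b \<in> mD M b) \<and>
     (\<forall>\<phi>. assignment M \<phi> \<longrightarrow>
        (\<forall>C c. wt C c \<longrightarrow> V \<phi> C \<in> mD M c) \<and>
        (\<forall>x a. V \<phi> (Var x a) = \<phi> (x, a)) \<and>
        (\<forall>c. V \<phi> (Con c) = mI M c) \<and>
        (\<forall>F A a b. wt F (Fun a b) \<longrightarrow> wt A a \<longrightarrow>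
           V \<phi> (Ap F A) = mAp M (V \<phi> F) (V \<phi> A)) \<and>
        (\<forall>x a B b. wt B b \<longrightarrow>
           (\<forall>e \<in> mD M a. mAp M (V \<phi> (Lam x a B)) e = V (\<phi>((x, a) := e)) B)) \<and>
        (\<forall>A a. wt A a \<longrightarrow> evalfree A \<longrightarrow> V \<phi> (Quote A) = mCons M (E A)) \<and>
        (\<forall>A b. wt A Epsilon \<longrightarrow>
           V \<phi> (Ap (Con (CIsExprT b)) A) = mBool M True \<longrightarrow>
           V \<phi> (Eval A b) = V \<phi> (THE B. evalfree B \<and> mCons M (E B) = V \<phi> A)) \<and>
        (\<forall>A b. wt A Epsilon \<longrightarrow>
           V \<phi> (Ap (Con (CIsExprT b)) A) = mBool M False \<longrightarrow>
           V \<phi> (Eval A b) = d b))"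

definition general_model :: "('c, 'u) model \<Rightarrow> bool" where
  "general_model M \<longleftrightarrow> is_interpretation M \<and> (\<exists>V d. valuation M V d)"

text \<open>Validity in M (the valuation of a general model is unique, so quantifying over all
  valuations is the same as using the valuation of M).\<close>
definition valid_in :: "('c, 'u) model \<Rightarrow> 'c expr \<Rightarrow> bool" where
  "valid_in M A \<longleftrightarrow>
     (\<forall>V d. valuation M V d \<longrightarrow> (\<forall>\<phi>. assignment M \<phi> \<longrightarrow> V \<phi> A = mBool M True))"

definition eq_expr :: "ty \<Rightarrow> 'c expr \<Rightarrow> 'c expr \<Rightarrow> 'c expr" where
  "eq_expr a A B = Ap (Ap (Con (CEq a)) A) B"

end

theory Submission
  imports Defs
begin

lemma val_H:
  assumes "valuation M V d" "assignment M \<phi>"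
  shows "(\<forall>C c. wt C c \<longrightarrow> V \<phi> C \<in> mD M c) \<and>
        (\<forall>x a. V \<phi> (Var x a) = \<phi> (x, a)) \<and>
        (\<forall>c. V \<phi> (Con c) = mI M c) \<and>
        (\<forall>F A a b. wt F (Fun a b) \<longrightarrow> wt A a \<longrightarrow>
           V \<phi> (Ap F A) = mAp M (V \<phi> F) (V \<phi> A)) \<and>
        (\<forall>x a B b. wt B b \<longrightarrow>
           (\<forall>e \<in> mD M a. mAp M (V \<phi> (Lam x a B)) e = V (\<phi>((x, a) := e)) B)) \<and>
        (\<forall>A a. wt A a \<longrightarrow> evalfree A \<longrightarrow> V \<phi> (Quote A) = mCons M (E A)) \<and>
        (\<forall>A b. wt A Epsilon \<longrightarrow>
           V \<phi> (Ap (Con (CIsExprT b)) A) = mBool M True \<longrightarrow>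
           V \<phi> (Eval A b) = V \<phi> (THE B. evalfree B \<and> mCons M (E B) = V \<phi> A)) \<and>
        (\<forall>A b. wt A Epsilon \<longrightarrow>
           V \<phi> (Ap (Con (CIsExprT b)) A) = mBool M False \<longrightarrow>
           V \<phi> (Eval A b) = d b)"
  using assms(1)[unfolded valuation_def, THEN conjunct2, THEN spec[of _ \<phi>], THEN mp, OF assms(2)] .

lemma val_wt: "valuation M V d \<Longrightarrow> assignment M \<phi> \<Longrightarrow> wt C c \<Longrightarrow> V \<phi> C \<in> mD M c"
  using val_H[of M V d \<phi>] by blast
lemma val_var: "valuation M V d \<Longrightarrow> assignment M \<phi> \<Longrightarrow> V \<phi> (Var x a) = \<phi> (x, a)"
  using val_H[of M V d \<phi>] by blast
lemma val_con: "valuation M V d \<Longrightarrow> assignment M \<phi> \<Longrightarrow> V \<phi> (Con c) = mI M c"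
  using val_H[of M V d \<phi>] by blast
lemma val_ap: "valuation M V d \<Longrightarrow> assignment M \<phi> \<Longrightarrow> wt F (Fun a b) \<Longrightarrow> wt A a \<Longrightarrow>
           V \<phi> (Ap F A) = mAp M (V \<phi> F) (V \<phi> A)"
  using val_H[of M V d \<phi>] by blast
lemma val_lam: "valuation M V d \<Longrightarrow> assignment M \<phi> \<Longrightarrow> wt B b \<Longrightarrow> e \<in> mD M a \<Longrightarrow>
           mAp M (V \<phi> (Lam x a B)) e = V (\<phi>((x, a) := e)) B"
  using val_H[of M V d \<phi>] by blast
lemma val_quote: "valuation M V d \<Longrightarrow> assignment M \<phi> \<Longrightarrow> wt A a \<Longrightarrow> evalfree A \<Longrightarrow> V \<phi> (Quote A) = mCons M (E A)"
  using val_H[of M V d \<phi>] by blast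
lemma fr_ext: "frame M \<Longrightarrow> f \<in> mD M (Fun a b) \<Longrightarrow> g \<in> mD M (Fun a b) \<Longrightarrow>
        (\<And>x. x \<in> mD M a \<Longrightarrow> mAp M f x = mAp M g x) \<Longrightarrow> f = g"
  unfolding frame_def by blast
lemma int_eq: "is_interpretation M \<Longrightarrow> x \<in> mD M a \<Longrightarrow> y \<in> mD M a \<Longrightarrow>
        mAp M (mAp M (mI M (CEq a)) x) y = mBool M (x = y)"
  unfolding is_interpretation_def by blast

lemma assign_upd:
  "assignment M \<phi> \<Longrightarrow> e \<in> mD M a \<Longrightarrow> assignment M (\<phi>((x,a):=e))"
  unfolding assignment_def by auto

lemma free_lemma:
  assumes val: "valuation M V d" and fr: "frame M"
  shows "wt C c \<Longrightarrow> evalfree C \<Longrightarrow> assignment M \<phi> \<Longrightarrow> assignment M \<psi> \<Longrightarrow>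
    (\<forall>z b. free z b C \<longrightarrow> \<phi> (z,b) = \<psi> (z,b)) \<Longrightarrow> V \<phi> C = V \<psi> C"
proof (induction C c arbitrary: \<phi> \<psi> rule: wt.induct)
  case (wt_var x a)
  then show ?case using val_var[OF val] by simp
next
  case (wt_con c)
  then show ?case using val_con[OF val] by simp
next
  case (wt_ap F a b A)
  have "V \<phi> F = V \<psi> F" using wt_ap.prems by (intro wt_ap.IH(1)) auto
  moreover have "V \<phi> A = V \<psi> A" using wt_ap.prems by (intro wt_ap.IH(2)) auto
  ultimately show ?case using val_ap[OF val wt_ap.prems(2) wt_ap.hyps] val_ap[OF val wt_ap.prems(3) wt_ap.hyps] by simp
next
  case (wt_lam B b x a)
  have w: "wt (Lam x a B) (Fun a b)" using wt_lam.hyps by (rule wt.wt_lam)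
  have i1: "V \<phi> (Lam x a B) \<in> mD M (Fun a b)" using val_wt[OF val wt_lam.prems(2) w] .
  have i2: "V \<psi> (Lam x a B) \<in> mD M (Fun a b)" using val_wt[OF val wt_lam.prems(3) w] .
  have "\<forall>e \<in> mD M a. mAp M (V \<phi> (Lam x a B)) e = mAp M (V \<psi> (Lam x a B)) e"
  proof
    fix e assume e: "e \<in> mD M a"
    have "mAp M (V \<phi> (Lam x a B)) e = V (\<phi>((x, a) := e)) B"
      using val_lam[OF val wt_lam.prems(2) wt_lam.hyps e] .
    also have "\<dots> = V (\<psi>((x, a) := e)) B"
      using wt_lam.prems by (intro wt_lam.IH assign_upd e) auto
    also have "\<dots> = mAp M (V \<psi> (Lam x a B)) e"
      using val_lam[OF val wt_lam.prems(3) wt_lam.hyps e] by simp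
    finally show "mAp M (V \<phi> (Lam x a B)) e = mAp M (V \<psi> (Lam x a B)) e" .
  qed
  then show ?case using fr_ext[OF fr i1 i2] by blast
next
  case (wt_quote A a)
  then show ?case using val_quote[OF val wt_quote.prems(2) wt_quote.hyps(1)] val_quote[OF val wt_quote.prems(3) wt_quote.hyps(1)] wt_quote.hyps(2) by simp
next
  case (wt_eval A b)
  then show ?case by simp
qed

theorem mainTheorem13:
  fixes M :: "('c, 'u) model" and A B :: "'c expr"
    and x y :: nat and \<alpha> \<beta> \<gamma> :: ty
  assumes "general_model M"
    and "(x, \<alpha>) \<noteq> (y, \<beta>)"
    and "wt A \<alpha>" and "wt B \<gamma>"
    and "(evalfree A \<and> \<not> free y \<beta> A) \<or> (evalfree B \<and> \<not> free x \<alpha> B)"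
  shows "valid_in M
           (eq_expr (Fun \<beta> \<gamma>) (Ap (Lam x \<alpha> (Lam y \<beta> B)) A)
                               (Lam y \<beta> (Ap (Lam x \<alpha> B) A)))"
  unfolding valid_in_def
proof (intro allI impI)
  fix V d \<phi>
  assume val: "valuation M V d" and as: "assignment M \<phi>"
  have interp: "is_interpretation M" using assms(1) unfolding general_model_def by blast
  hence fr: "frame M" unfolding is_interpretation_def by (elim conjE)
  have Vc: "\<And>\<psi> C c. assignment M \<psi> \<Longrightarrow> wt C c \<Longrightarrow> V \<psi> C \<in> mD M c"
    using val_wt[OF val] by blast
  have Vap: "\<And>\<psi> F a b A. assignment M \<psi> \<Longrightarrow> wt F (Fun a b) \<Longrightarrow> wt A a \<Longrightarrow>
           V \<psi> (Ap F A) = mAp M (V \<psi> F) (V \<psi> A)"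
    using val_ap[OF val] by blast
  have Vlam: "\<And>\<psi> x a B b e. assignment M \<psi> \<Longrightarrow> wt B b \<Longrightarrow> e \<in> mD M a \<Longrightarrow>
           mAp M (V \<psi> (Lam x a B)) e = V (\<psi>((x, a) := e)) B"
    using val_lam[OF val] by blast
  have Vcon: "\<And>\<psi> c. assignment M \<psi> \<Longrightarrow> V \<psi> (Con c) = mI M c"
    using val_con[OF val] by blast
  define L where "L = Ap (Lam x \<alpha> (Lam y \<beta> B)) A"
  define R where "R = Lam y \<beta> (Ap (Lam x \<alpha> B) A)"
  have wLam1: "wt (Lam x \<alpha> (Lam y \<beta> B)) (Fun \<alpha> (Fun \<beta> \<gamma>))"
    using assms(4) by (intro wt.wt_lam)
  have wL: "wt L (Fun \<beta> \<gamma>)" unfolding L_def using wLam1 assms(3) by (rule wt.wt_ap)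
  have wLx: "wt (Lam x \<alpha> B) (Fun \<alpha> \<gamma>)" using assms(4) by (rule wt.wt_lam)
  have wApR: "wt (Ap (Lam x \<alpha> B) A) \<gamma>" using wLx assms(3) by (rule wt.wt_ap)
  have wR: "wt R (Fun \<beta> \<gamma>)" unfolding R_def using wApR by (rule wt.wt_lam)
  have wEq: "wt (Con (CEq (Fun \<beta> \<gamma>))) (Fun (Fun \<beta> \<gamma>) (Fun (Fun \<beta> \<gamma>) Omicron))"
    using wt.wt_con[of "CEq (Fun \<beta> \<gamma>)"] by simp
  have wEqL: "wt (Ap (Con (CEq (Fun \<beta> \<gamma>))) L) (Fun (Fun \<beta> \<gamma>) Omicron)"
    using wEq wL by (rule wt.wt_ap)
  have iL: "V \<phi> L \<in> mD M (Fun \<beta> \<gamma>)" using Vc as wL by blast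
  have iR: "V \<phi> R \<in> mD M (Fun \<beta> \<gamma>)" using Vc as wR by blast
  define a where "a = V \<phi> A"
  have ia: "a \<in> mD M \<alpha>" unfolding a_def using Vc as assms(3) by blast
  have "\<forall>e \<in> mD M \<beta>. mAp M (V \<phi> L) e = mAp M (V \<phi> R) e"
  proof
    fix e assume e: "e \<in> mD M \<beta>"
    have as1: "assignment M (\<phi>((x,\<alpha>):=a))" using as ia by (rule assign_upd)
    have as2: "assignment M (\<phi>((y,\<beta>):=e))" using as e by (rule assign_upd)
    have as12: "assignment M (\<phi>((x,\<alpha>):=a, (y,\<beta>):=e))" using as1 e by (rule assign_upd)
    have "V \<phi> L = mAp M (V \<phi> (Lam x \<alpha> (Lam y \<beta> B))) a"
      unfolding L_def a_def using Vap as wLam1 assms(3) by blast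
    also have "\<dots> = V (\<phi>((x,\<alpha>):=a)) (Lam y \<beta> B)"
      using Vlam[OF as _ ia] wt.wt_lam[OF assms(4)] by blast
    finally have "mAp M (V \<phi> L) e = V (\<phi>((x,\<alpha>):=a, (y,\<beta>):=e)) B"
      using Vlam[OF as1 assms(4) e] by simp
    note lhs = this
    define a' where "a' = V (\<phi>((y,\<beta>):=e)) A"
    have ia': "a' \<in> mD M \<alpha>" unfolding a'_def using Vc as2 assms(3) by blast
    have as21: "assignment M (\<phi>((y,\<beta>):=e, (x,\<alpha>):=a'))" using as2 ia' by (rule assign_upd)
    have "mAp M (V \<phi> R) e = V (\<phi>((y,\<beta>):=e)) (Ap (Lam x \<alpha> B) A)"
      unfolding R_def using Vlam[OF as wApR e] .
    also have "\<dots> = mAp M (V (\<phi>((y,\<beta>):=e)) (Lam x \<alpha> B)) a'"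
      unfolding a'_def using Vap[OF as2 wLx assms(3)] .
    also have "\<dots> = V (\<phi>((y,\<beta>):=e, (x,\<alpha>):=a')) B"
      using Vlam[OF as2 assms(4) ia'] .
    finally have rhs: "mAp M (V \<phi> R) e = V (\<phi>((y,\<beta>):=e, (x,\<alpha>):=a')) B" .
    show "mAp M (V \<phi> L) e = mAp M (V \<phi> R) e"
      using assms(5)
    proof
      assume h: "evalfree A \<and> \<not> free y \<beta> A"
      have "a' = a" unfolding a'_def a_def
        using free_lemma[OF val fr assms(3), of "\<phi>((y,\<beta>):=e)" \<phi>] h as as2 by auto
      moreover have "\<phi>((y,\<beta>):=e, (x,\<alpha>):=a) = \<phi>((x,\<alpha>):=a, (y,\<beta>):=e)"
        using assms(2) by (auto simp: fun_upd_twist)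
      ultimately show ?thesis using lhs rhs by simp
    next
      assume h: "evalfree B \<and> \<not> free x \<alpha> B"
      have "V (\<phi>((x,\<alpha>):=a, (y,\<beta>):=e)) B = V (\<phi>((y,\<beta>):=e)) B"
        by (rule free_lemma[OF val fr assms(4)]) (use h as12 as2 in auto)
      moreover have "V (\<phi>((y,\<beta>):=e, (x,\<alpha>):=a')) B = V (\<phi>((y,\<beta>):=e)) B"
        by (rule free_lemma[OF val fr assms(4)]) (use h as21 as2 in auto)
      ultimately show ?thesis using lhs rhs by simp
    qed
  qed
  hence eqLR: "V \<phi> L = V \<phi> R" using fr_ext[OF fr iL iR] by blast
  have "V \<phi> (eq_expr (Fun \<beta> \<gamma>) L R)
        = mAp M (mAp M (mI M (CEq (Fun \<beta> \<gamma>))) (V \<phi> L)) (V \<phi> R)"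
    unfolding eq_expr_def using Vap[OF as wEqL wR] Vap[OF as wEq wL] Vcon[OF as] by simp
  also have "\<dots> = mBool M (V \<phi> L = V \<phi> R)"
    using int_eq[OF interp iL iR] .
  finally show "V \<phi> (eq_expr (Fun \<beta> \<gamma>) (Ap (Lam x \<alpha> (Lam y \<beta> B)) A)
                               (Lam y \<beta> (Ap (Lam x \<alpha> B) A))) = mBool M True"
    using eqLR unfolding L_def R_def by simp
qed

end
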